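(* Let $\mathbb{X}\subseteq\mathbb{P}^2$ be a $\Bbbk$-configuration of type $(d_1,\dots,d_s)$ with $s\ge2$, defined by subsets $\mathbb{X}_1,\dots,\mathbb{X}_s$ and lines $\mathbb{L}_1,\dots,\mathbb{L}_s$. Let $j,i$ be integers with $0\le j$ and $j+2\le i\le s-1$, and suppose that $|\mathbb{L}_{s-k}\cap\mathbb{X}|=d_s$ for $k=0,\dots,j$; $|\mathbb{L}_{s-k}\cap\mathbb{X}|<d_s$ for $k=j+1,\dots,i-1$; and $|\mathbb{L}_{s-i}\cap\mathbb{X}|=d_s$. Set $\mathbb{T}=\mathbb{L}_{s-i}\cap(\mathbb{X}_{s-j-1}\cup\mathbb{X}_{s-j-2}\cup\cdots\cup\mathbb{X}_{s-i+1})$. Then $\mathbb{X}$ is also a $\Bbbk$-configuration of type $(d_1,\dots,d_s)$ defined by the subsets $\mathbb{X}'_1,\dots,\mathbb{X}'_s$ and lines $\mathbb{L}'_1,\dots,\mathbb{L}'_s$, where: $\mathbb{X}'_k=\mathbb{X}_k$, $\mathbb{L}'_k=\mathbb{L}_k$ for $k=1,\dots,s-i-1$; $\mathbb{X}'_k=\mathbb{X}_{k+1}\setminus\mathbb{T}$, $\mathbb{L}'_k=\mathbb{L}_{k+1}$ for $k=s-i,\dots,s-j-2$; $\mathbb{X}'_{s-j-1}=\mathbb{X}_{s-i}\cup\mathbb{T}$, $\mathbb{L}'_{s-j-1}=\mathbb{L}_{s-i}$; and $\mathbb{X}'_k=\mathbb{X}_k$, $\mathbb{L}'_k=\mathbb{L}_k$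 for $k=s-j,\dots,s$.
   Context: $\Bbbk$ is an algebraically closed field. A $\Bbbk$-configuration of type $(d_1,\dots,d_s)$ is a finite set $\mathbb{X}\subseteq\mathbb{P}^2$ for which there exist integers $1\le d_1<\cdots<d_s$, subsets $\mathbb{X}_1,\dots,\mathbb{X}_s$ of $\mathbb{X}$ and distinct lines $\mathbb{L}_1,\dots,\mathbb{L}_s\subseteq\mathbb{P}^2$ such that (1) $\mathbb{X}=\bigcup_{i=1}^s\mathbb{X}_i$; (2) $|\mathbb{X}_i|=d_i$ and $\mathbb{X}_i\subseteq\mathbb{L}_i$ for each $i$; (3) for $1<i\le s$, $\mathbb{L}_i$ contains no point of $\mathbb{X}_j$ for any $j<i$. We say $\mathbb{X}$ is defined by these subsets and lines; such defining data need not be unique. *)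

theory Defs
  imports "HOL-Computational_Algebra.Polynomial"
begin

text \<open>Points of the projective plane over a field: a point is the set of
  nonzero homogeneous coordinate vectors representing it (a punctured line
  through the origin in the 3-space).\<close>

type_synonym 'a vec3 = "'a \<times> 'a \<times> 'a"

definition scale3 :: "'a::field \<Rightarrow> 'a vec3 \<Rightarrow> 'a vec3" where
  "scale3 c v = (c * fst v, c * fst (snd v), c * snd (snd v))"

definition proj_point_of :: "'a::field vec3 \<Rightarrow> 'a vec3 set" where
  "proj_point_of v = {scale3 c v | c. c \<noteq> 0}"

definition P2 :: "'a::field vec3 set set" where
  "P2 = {proj_point_of v | v. v \<noteq> (0, 0, 0)}"

definition proj_line_of :: "'a::field vec3 \<Rightarrow> 'a vec3 set set" where
  "proj_line_of l = {p \<in> P2. \<forall>v\<in>p.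
      fst l * fst v + fst (snd l) * fst (snd v) + snd (snd l) * snd (snd v) = 0}"

definition is_line :: "'a::field vec3 set set \<Rightarrow> bool" where
  "is_line L \<longleftrightarrow> (\<exists>l. l \<noteq> (0, 0, 0) \<and> L = proj_line_of l)"

definition kconfig ::
  "'a::field vec3 set set \<Rightarrow> (nat \<Rightarrow> nat) \<Rightarrow> (nat \<Rightarrow> 'a vec3 set set)
     \<Rightarrow> (nat \<Rightarrow> 'a vec3 set set) \<Rightarrow> nat \<Rightarrow> bool" where
  "kconfig X d Xs Ls s \<longleftrightarrow>
     finite X \<and> X \<subseteq> P2 \<and>
     (\<forall>i\<in>{1..s}. 1 \<le> d i) \<and>
     (\<forall>i\<in>{1..s}. \<forall>i'\<in>{1..s}. i < i' \<longrightarrow> d i < d i') \<and>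
     X = (\<Union>i\<in>{1..s}. Xs i) \<and>
     (\<forall>i\<in>{1..s}. card (Xs i) = d i \<and> Xs i \<subseteq> Ls i \<and> is_line (Ls i)) \<and>
     inj_on Ls {1..s} \<and>
     (\<forall>i\<in>{1..s}. \<forall>j\<in>{1..s}. 1 < i \<and> j < i \<longrightarrow> Ls i \<inter> Xs j = {})"

end

theory Submission
  imports Defs
begin


definition dot3 :: "'a::field vec3 \<Rightarrow> 'a vec3 \<Rightarrow> 'a" where
  "dot3 l v = fst l * fst v + fst (snd l) * fst (snd v) + snd (snd l) * snd (snd v)"

lemma dot3_scale2: "dot3 l (scale3 c v) = c * dot3 l v"
  by (simp add: dot3_def scale3_def algebra_simps)
lemma dot3_scale1: "dot3 (scale3 c l) v = c * dot3 l v"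
  by (simp add: dot3_def scale3_def algebra_simps)

lemma point_in_P2: "v \<noteq> (0,0,0) \<Longrightarrow> proj_point_of v \<in> P2"
  unfolding P2_def by blast

lemma point_mem_line:
  assumes "v \<noteq> (0,0,0)"
  shows "proj_point_of v \<in> proj_line_of l \<longleftrightarrow> dot3 l v = 0"
proof
  assume "proj_point_of v \<in> proj_line_of l"
  moreover have "v \<in> proj_point_of v"
    unfolding proj_point_of_def by (rule CollectI, rule exI[of _ 1]) (simp add: scale3_def)
  ultimately show "dot3 l v = 0" unfolding proj_line_of_def dot3_def by blast
next
  assume "dot3 l v = 0"
  then have "\<forall>u\<in>proj_point_of v. dot3 l u = 0"
    unfolding proj_point_of_def by (auto simp: dot3_scale2)
  then show "proj_point_of v \<in> proj_line_of l"
    using point_in_P2[OF assms]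
    unfolding proj_line_of_def dot3_def by blast
qed

lemma line_scale:
  assumes "c \<noteq> 0" shows "proj_line_of (scale3 c l) = proj_line_of l"
  unfolding proj_line_of_def using assms
  by (auto simp: dot3_scale1[unfolded dot3_def])

lemma scale3_scale3: "scale3 a (scale3 b v) = scale3 (a*b) v"
  by (simp add: scale3_def)

lemma point_scale:
  assumes "c \<noteq> 0" shows "proj_point_of (scale3 c v) = proj_point_of v"
  unfolding proj_point_of_def
proof (intro set_eqI iffI)
  fix x assume "x \<in> {scale3 c' (scale3 c v) |c'. c' \<noteq> 0}"
  then obtain c' where "c' \<noteq> 0" "x = scale3 c' (scale3 c v)" by blast
  then show "x \<in> {scale3 c' v |c'. c' \<noteq> 0}" using assms
    by (auto simp: scale3_scale3 intro!: exI[of _ "c'*c"])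
next
  fix x assume "x \<in> {scale3 c' v |c'. c' \<noteq> 0}"
  then obtain c' where "c' \<noteq> 0" "x = scale3 c' v" by blast
  then show "x \<in> {scale3 c' (scale3 c v) |c'. c' \<noteq> 0}" using assms
    by (auto simp: scale3_scale3 intro!: exI[of _ "c'/c"])
qed

lemma cross_zero:
  fixes a1 a2 a3 b1 b2 b3 :: "'a::field"
  assumes "a2*b3 - a3*b2 = 0" "a3*b1 - a1*b3 = 0" "a1*b2 - a2*b1 = 0"
    and "(b1,b2,b3) \<noteq> (0,0,0)"
  shows "\<exists>c. (a1,a2,a3) = scale3 c (b1,b2,b3)"
proof -
  consider "b1 \<noteq> 0" | "b2 \<noteq> 0" | "b3 \<noteq> 0" using assms(4) by auto
  then show ?thesis
  proof cases
    case 1 then show ?thesis using assms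
      by (intro exI[of _ "a1/b1"]) (auto simp: scale3_def field_simps algebra_simps eq_neg_iff_add_eq_0 right_minus_eq)
  next
    case 2 then show ?thesis using assms
      by (intro exI[of _ "a2/b2"]) (auto simp: scale3_def field_simps algebra_simps eq_neg_iff_add_eq_0 right_minus_eq)
  next
    case 3 then show ?thesis using assms
      by (intro exI[of _ "a3/b3"]) (auto simp: scale3_def field_simps algebra_simps eq_neg_iff_add_eq_0 right_minus_eq)
  qed
qed

lemma P2_cases:
  assumes "p \<in> P2" obtains v where "v \<noteq> (0,0,0)" "p = proj_point_of v"
  using assms unfolding P2_def by blast

lemma line_sub_P2: "proj_line_of l \<subseteq> P2"
  unfolding proj_line_of_def by blast

lemma line_through_two:
  fixes v w l :: "'a::field vec3"
  assumes v: "v \<noteq> (0,0,0)" and w: "w \<noteq> (0,0,0)"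
    and pq: "proj_point_of v \<noteq> proj_point_of w"
    and l: "l \<noteq> (0,0,0)" and lv: "dot3 l v = 0" and lw: "dot3 l w = 0"
  shows "proj_line_of l = proj_line_of
     (fst (snd v) * snd (snd w) - snd (snd v) * fst (snd w),
      snd (snd v) * fst w - fst v * snd (snd w),
      fst v * fst (snd w) - fst (snd v) * fst w)"
proof -
  obtain v1 v2 v3 where vv: "v = (v1,v2,v3)" by (cases v) auto
  obtain w1 w2 w3 where ww: "w = (w1,w2,w3)" by (cases w) auto
  obtain l1 l2 l3 where ll: "l = (l1,l2,l3)" by (cases l) auto
  define n where "n = (v2*w3 - v3*w2, v3*w1 - v1*w3, v1*w2 - v2*w1)"
  have n0: "n \<noteq> (0,0,0)"
  proof
    assume "n = (0,0,0)"
    then have "\<exists>c. (w1,w2,w3) = scale3 c (v1,v2,v3)"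
      using v unfolding vv n_def
      by (intro cross_zero) (auto simp: algebra_simps)
    then obtain c where c: "w = scale3 c v" using vv ww by auto
    with w have "c \<noteq> 0" by (auto simp: scale3_def)
    then have "proj_point_of w = proj_point_of v" using c point_scale by metis
    with pq show False by simp
  qed
  obtain n1 n2 n3 where nn: "n = (n1,n2,n3)" by (cases n) auto
  have "\<exists>c. (l1,l2,l3) = scale3 c (n1,n2,n3)"
  proof (rule cross_zero)
    show "(n1,n2,n3) \<noteq> (0,0,0)" using n0 nn by simp
    have e1: "l1*v1 + l2*v2 + l3*v3 = 0" and e2: "l1*w1 + l2*w2 + l3*w3 = 0"
      using lv lw by (simp_all add: dot3_def vv ww ll)
    have n1: "n1 = v2*w3 - v3*w2" and n2: "n2 = v3*w1 - v1*w3" and n3: "n3 = v1*w2 - v2*w1"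
      using nn n_def by auto
    have "l2*n3 - l3*n2 = v1*(l1*w1 + l2*w2 + l3*w3) - w1*(l1*v1 + l2*v2 + l3*v3)"
      unfolding n2 n3 by (simp add: algebra_simps)
    then show "l2*n3 - l3*n2 = 0" using e1 e2 by simp
    have "l3*n1 - l1*n3 = v2*(l1*w1 + l2*w2 + l3*w3) - w2*(l1*v1 + l2*v2 + l3*v3)"
      unfolding n1 n3 by (simp add: algebra_simps)
    then show "l3*n1 - l1*n3 = 0" using e1 e2 by simp
    have "l1*n2 - l2*n1 = v3*(l1*w1 + l2*w2 + l3*w3) - w3*(l1*v1 + l2*v2 + l3*v3)"
      unfolding n1 n2 by (simp add: algebra_simps)
    then show "l1*n2 - l2*n1 = 0" using e1 e2 by simp
  qed
  then obtain c where c: "l = scale3 c n" using ll nn by auto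
  with l have "c \<noteq> 0" by (auto simp: scale3_def)
  then have "proj_line_of l = proj_line_of n" using c line_scale by metis
  then show ?thesis by (simp add: n_def vv ww)
qed

lemma lines_meet_once:
  fixes L L' :: "'a::field vec3 set set"
  assumes "is_line L" "is_line L'" "L \<noteq> L'"
    and "p \<in> L" "p \<in> L'" "q \<in> L" "q \<in> L'"
  shows "p = q"
proof (rule ccontr)
  assume pq: "p \<noteq> q"
  obtain l where l: "l \<noteq> (0,0,0)" "L = proj_line_of l" using assms(1) is_line_def by blast
  obtain l' where l': "l' \<noteq> (0,0,0)" "L' = proj_line_of l'" using assms(2) is_line_def by blast
  have "p \<in> P2" using assms(4) l line_sub_P2 by blast
  then obtain v where v: "v \<noteq> (0,0,0)" "p = proj_point_of v" by (rule P2_cases)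
  have "q \<in> P2" using assms(6) l line_sub_P2 by blast
  then obtain w where w: "w \<noteq> (0,0,0)" "q = proj_point_of w" by (rule P2_cases)
  have "dot3 l v = 0" "dot3 l w = 0" "dot3 l' v = 0" "dot3 l' w = 0"
    using assms(4-7) l l' v w point_mem_line by blast+
  then have "L = L'"
    using line_through_two[OF v(1) w(1) _ l(1)] line_through_two[OF v(1) w(1) _ l'(1)]
      pq v w l l' by simp
  with assms(3) show False by simp
qed

lemma card_line_inter_le1:
  assumes "is_line L" "is_line L'" "L \<noteq> L'" "finite A" "A \<subseteq> L'"
  shows "card (L \<inter> A) \<le> 1"
proof -
  have "finite (L \<inter> A)" using assms(4) by simp
  moreover have "\<forall>p\<in>L \<inter> A. \<forall>q\<in>L \<inter> A. p = q"
    using lines_meet_once[OF assms(1-3)] assms(5) by blast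
  ultimately show ?thesis using card_le_Suc0_iff_eq by (metis One_nat_def)
qed

lemma sum_le1_all1:
  fixes f :: "'b \<Rightarrow> nat"
  assumes "finite I" "\<forall>m\<in>I. f m \<le> 1" "card I \<le> sum f I" "m \<in> I"
  shows "f m = 1"
proof (rule ccontr)
  assume "f m \<noteq> 1"
  then have "f m < 1" using assms(2,4) by force
  then have "sum f I < sum (\<lambda>_. 1) I"
    using assms by (intro sum_strict_mono_ex1) auto
  with assms(3) show False by simp
qed

lemma mono_d:
  assumes "\<forall>i\<in>{1..s}. \<forall>i'\<in>{1..s}. i < i' \<longrightarrow> (d::nat\<Rightarrow>nat) i < d i'"
    and "1 \<le> m" "m + n \<le> s"
  shows "d m + n \<le> d (m + n)"
  using assms(3)
proof (induction n)
  case 0 then show ?case by simp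
next
  case (Suc n)
  then have "d m + n \<le> d (m + n)" by simp
  moreover have "d (m + n) < d (m + Suc n)" using assms(1,2) Suc.prems by auto
  ultimately show ?case by simp
qed



theorem lemma2p9:
  fixes X :: "'a::alg_closed_field vec3 set set"
    and d :: "nat \<Rightarrow> nat"
    and Xs :: "nat \<Rightarrow> 'a vec3 set set"
    and Ls :: "nat \<Rightarrow> 'a vec3 set set"
    and s i j :: nat
  assumes conf: "kconfig X d Xs Ls s"
    and s2: "2 \<le> s"
    and ij: "j + 2 \<le> i" and i_s: "i \<le> s - 1"
    and full_top: "\<forall>k\<in>{0..j}. card (Ls (s - k) \<inter> X) = d s"
    and middle: "\<forall>k\<in>{j+1..i-1}. card (Ls (s - k) \<inter> X) < d s"
    and full_i: "card (Ls (s - i) \<inter> X) = d s"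
  shows "let T = Ls (s - i) \<inter> (\<Union>k\<in>{s-i+1..s-j-1}. Xs k) in
    kconfig X d
      (\<lambda>k. if k \<le> s - i - 1 then Xs k
           else if k \<le> s - j - 2 then Xs (k + 1) - T
           else if k = s - j - 1 then Xs (s - i) \<union> T
           else Xs k)
      (\<lambda>k. if k \<le> s - i - 1 then Ls k
           else if k \<le> s - j - 2 then Ls (k + 1)
           else if k = s - j - 1 then Ls (s - i)
           else Ls k)
      s"
proof -
  define a where "a = s - i"
  define b where "b = s - j - 1"
  have a1: "1 \<le> a" and ab: "a + 1 \<le> b" and bs: "b + 1 \<le> s"
    using s2 ij i_s unfolding a_def b_def by auto
  have e1: "s - i - 1 = a - 1" and e2: "s - j - 2 = b - 1" and e3: "s - i + 1 = a + 1"
    using s2 ij i_s unfolding a_def b_def by auto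
  define T where "T = Ls a \<inter> (\<Union>k\<in>{a+1..b}. Xs k)"
  define X' where "X' = (\<lambda>k. if k \<le> a - 1 then Xs k
           else if k \<le> b - 1 then Xs (k + 1) - T
           else if k = b then Xs a \<union> T
           else Xs k)"
  define L' where "L' = (\<lambda>k. if k \<le> a - 1 then Ls k
           else if k \<le> b - 1 then Ls (k + 1)
           else if k = b then Ls a
           else Ls k)"
  note kc = conf[unfolded kconfig_def]
  have finX: "finite X" and XP2: "X \<subseteq> P2" and d1: "\<forall>i\<in>{1..s}. 1 \<le> d i"
    and dmono: "\<forall>i\<in>{1..s}. \<forall>i'\<in>{1..s}. i < i' \<longrightarrow> d i < d i'"
    and XU: "X = (\<Union>i\<in>{1..s}. Xs i)"
    and XL: "\<And>k. k \<in> {1..s} \<Longrightarrow> card (Xs k) = d k \<and> Xs k \<subseteq> Ls k \<and> is_line (Ls k)"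
    and inj: "inj_on Ls {1..s}"
    and disj: "\<And>k m. k \<in> {1..s} \<Longrightarrow> m \<in> {1..s} \<Longrightarrow> m < k \<Longrightarrow> Ls k \<inter> Xs m = {}"
    using kc by (auto simp: Ball_def)
  have finXs: "\<And>k. k \<in> {1..s} \<Longrightarrow> finite (Xs k)" using XU finX
    by (meson UN_I finite_subset subsetI)
  have Xdisj: "\<And>m m'. m \<in> {1..s} \<Longrightarrow> m' \<in> {1..s} \<Longrightarrow> m \<noteq> m' \<Longrightarrow> Xs m \<inter> Xs m' = {}"
  proof -
    fix m m' assume h: "m \<in> {1..s}" "m' \<in> {1..s}" "m \<noteq> m'"
    show "Xs m \<inter> Xs m' = {}"
    proof (cases "m < m'")
      case True then show ?thesis using disj[of m' m] XL[of m'] h by blast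
    next
      case False then show ?thesis using disj[of m m'] XL[of m] h by auto
    qed
  qed
  define c where "c = (\<lambda>m. card (Ls a \<inter> Xs m))"
  have c_le: "\<forall>m\<in>{a+1..s}. c m \<le> 1"
  proof
    fix m assume m: "m \<in> {a+1..s}"
    have "a \<in> {1..s}" "m \<in> {1..s}" "a \<noteq> m" using m a1 ab bs by auto
    then have "Ls a \<noteq> Ls m" using inj unfolding inj_on_def by blast
    then show "c m \<le> 1" unfolding c_def
      using card_line_inter_le1[of "Ls a" "Ls m" "Xs m"] XL[of a] XL[of m] finXs[of m] m a1 ab bs
      by auto
  qed
  have LX: "Ls a \<inter> X = (\<Union>m\<in>{a..s}. Ls a \<inter> Xs m)"
  proof -
    have "Ls a \<inter> X = (\<Union>m\<in>{1..s}. Ls a \<inter> Xs m)" using XU by blast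
    also have "\<dots> = (\<Union>m\<in>{a..s}. Ls a \<inter> Xs m)"
    proof (intro equalityI subsetI)
      fix x assume "x \<in> (\<Union>m\<in>{1..s}. Ls a \<inter> Xs m)"
      then obtain m where m: "m \<in> {1..s}" "x \<in> Ls a \<inter> Xs m" by blast
      have "\<not> m < a" using disj[of a m] m a1 ab bs by auto
      then show "x \<in> (\<Union>m\<in>{a..s}. Ls a \<inter> Xs m)" using m by auto
    next
      fix x assume "x \<in> (\<Union>m\<in>{a..s}. Ls a \<inter> Xs m)"
      then show "x \<in> (\<Union>m\<in>{1..s}. Ls a \<inter> Xs m)" using a1 by auto
    qed
    finally show ?thesis .
  qed
  have Xdisj': "\<And>m m'. m \<in> {a..s} \<Longrightarrow> m' \<in> {a..s} \<Longrightarrow> m \<noteq> m' \<Longrightarrow> (Ls a \<inter> Xs m) \<inter> (Ls a \<inter> Xs m') = {}"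
    using Xdisj a1 by (metis Int_assoc Int_empty_right atLeastAtMost_iff inf_left_commute le_trans)
  have "card (Ls a \<inter> X) = (\<Sum>m\<in>{a..s}. c m)"
    unfolding LX c_def
  proof (rule card_UN_disjoint)
    show "finite {a..s}" by simp
    show "\<forall>m\<in>{a..s}. finite (Ls a \<inter> Xs m)" using finXs a1 by auto
    show "\<forall>m\<in>{a..s}. \<forall>m'\<in>{a..s}. m \<noteq> m' \<longrightarrow> Ls a \<inter> Xs m \<inter> (Ls a \<inter> Xs m') = {}"
      using Xdisj' by blast
  qed
  also have "\<dots> = c a + (\<Sum>m\<in>{a+1..s}. c m)"
    using ab bs by (subst sum.atLeast_Suc_atMost) auto
  also have "c a = d a" unfolding c_def using XL[of a] a1 ab bs by (simp add: Int_absorb1)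
  finally have cnt: "d s = d a + (\<Sum>m\<in>{a+1..s}. c m)" using full_i a_def by simp
  have "(\<Sum>m\<in>{a+1..s}. c m) \<le> (\<Sum>m\<in>{a+1..s}. 1)" by (rule sum_mono) (use c_le in auto)
  then have up: "d s \<le> d a + (s - a)" using cnt by simp
  have lo: "d a + (s - a) \<le> d s" using mono_d[OF dmono a1, of "s - a"] ab bs by simp
  have c1: "\<And>m. m \<in> {a+1..s} \<Longrightarrow> c m = 1"
    by (rule sum_le1_all1[OF _ c_le]) (use cnt lo in auto)
  have dm: "\<And>m. m \<in> {a..s} \<Longrightarrow> d m = d a + (m - a)"
  proof -
    fix m assume m: "m \<in> {a..s}"
    have "d a + (m - a) \<le> d m" using mono_d[OF dmono a1, of "m - a"] m by simp
    moreover have "d m + (s - m) \<le> d s" using mono_d[OF dmono, of m "s - m"] m a1 by simp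
    ultimately show "d m = d a + (m - a)" using up lo m by linarith
  qed
  have XLa: "Xs a \<subseteq> Ls a" and LLa: "is_line (Ls a)" using XL[of a] a1 ab bs by auto
  have TL: "T \<subseteq> Ls a" unfolding T_def by blast
  have TU: "T \<subseteq> (\<Union>k\<in>{a+1..b}. Xs k)" unfolding T_def by blast
  have TXm: "\<And>m. m \<in> {a+1..b} \<Longrightarrow> Xs m \<inter> T = Ls a \<inter> Xs m"
    unfolding T_def by blast
  have TXa: "Xs a \<inter> T = {}"
  proof -
    have "\<And>m. m \<in> {a+1..b} \<Longrightarrow> Xs a \<inter> Xs m = {}" using Xdisj a1 ab bs by auto
    then show ?thesis using TU by blast
  qed
  have TX: "T \<subseteq> X"
  proof
    fix x assume "x \<in> T"
    then obtain m where "m \<in> {a+1..b}" "x \<in> Xs m" using TU by blast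
    then show "x \<in> X" using XU a1 bs by auto
  qed
  have cardT: "card T = b - a"
  proof -
    have "T = (\<Union>m\<in>{a+1..b}. Ls a \<inter> Xs m)" unfolding T_def by blast
    also have "card \<dots> = (\<Sum>m\<in>{a+1..b}. c m)" unfolding c_def
    proof (rule card_UN_disjoint)
      show "finite {a+1..b}" by simp
      show "\<forall>m\<in>{a+1..b}. finite (Ls a \<inter> Xs m)" using finXs a1 bs by auto
      show "\<forall>m\<in>{a+1..b}. \<forall>m'\<in>{a+1..b}. m \<noteq> m' \<longrightarrow> Ls a \<inter> Xs m \<inter> (Ls a \<inter> Xs m') = {}"
        using Xdisj' bs by auto
    qed
    also have "\<dots> = (\<Sum>m\<in>{a+1..b}. 1)" using c1 bs by (intro sum.cong) auto
    finally show ?thesis by simp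
  qed
  have X'_lo: "\<And>k. k < a \<Longrightarrow> X' k = Xs k" and L'_lo: "\<And>k. k < a \<Longrightarrow> L' k = Ls k"
    unfolding X'_def L'_def by auto
  have X'_mid: "\<And>k. a \<le> k \<Longrightarrow> k < b \<Longrightarrow> X' k = Xs (k+1) - T"
    and L'_mid: "\<And>k. a \<le> k \<Longrightarrow> k < b \<Longrightarrow> L' k = Ls (k+1)"
    unfolding X'_def L'_def using a1 by auto
  have X'_b: "X' b = Xs a \<union> T" and L'_b: "L' b = Ls a"
    unfolding X'_def L'_def using a1 ab by auto
  have X'_hi: "\<And>k. b < k \<Longrightarrow> X' k = Xs k" and L'_hi: "\<And>k. b < k \<Longrightarrow> L' k = Ls k"
    unfolding X'_def L'_def using a1 ab by auto
  have goalA: "X = (\<Union>k\<in>{1..s}. X' k)"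
  proof (intro equalityI subsetI)
    fix x assume "x \<in> X"
    then obtain m where m: "m \<in> {1..s}" "x \<in> Xs m" using XU by blast
    consider "m < a" | "m = a" | "a < m" "m \<le> b" | "b < m" by linarith
    then show "x \<in> (\<Union>k\<in>{1..s}. X' k)"
    proof cases
      case 1 then show ?thesis using m X'_lo by blast
    next
      case 2 then show ?thesis using m X'_b ab bs a1
        by (intro UN_I[of b]) auto
    next
      case 3 show ?thesis
      proof (cases "x \<in> T")
        case True then show ?thesis using X'_b ab bs a1 by (intro UN_I[of b]) auto
      next
        case False then show ?thesis using X'_mid[of "m - 1"] 3 m a1
          by (intro UN_I[of "m - 1"]) auto
      qed
    next
      case 4 then show ?thesis using m X'_hi by blast
    qed
  next
    fix x assume "x \<in> (\<Union>k\<in>{1..s}. X' k)"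
    then obtain k where k: "k \<in> {1..s}" "x \<in> X' k" by blast
    consider "k < a" | "a \<le> k" "k < b" | "k = b" | "b < k" by linarith
    then show "x \<in> X"
    proof cases
      case 1 then show ?thesis using k X'_lo XU by auto
    next
      case 2 then show ?thesis using k X'_mid XU bs by auto
    next
      case 3 then show ?thesis using k X'_b XU TX a1 ab bs by auto
    next
      case 4 then show ?thesis using k X'_hi XU by auto
    qed
  qed
  have goalB: "\<forall>k\<in>{1..s}. card (X' k) = d k \<and> X' k \<subseteq> L' k \<and> is_line (L' k)"
  proof
    fix k assume k: "k \<in> {1..s}"
    consider "k < a" | "a \<le> k" "k < b" | "k = b" | "b < k" by linarith
    then show "card (X' k) = d k \<and> X' k \<subseteq> L' k \<and> is_line (L' k)"
    proof cases
      case 1 then show ?thesis using k X'_lo L'_lo XL by auto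
    next
      case 2
      have k1: "k + 1 \<in> {1..s}" "k+1 \<in> {a+1..b}" using 2 bs a1 by auto
      have "card (Xs (k+1) - T) = card (Xs (k+1)) - card (Xs (k+1) \<inter> T)"
        using finXs[OF k1(1)] by (simp add: card_Diff_subset_Int)
      also have "\<dots> = d (k+1) - 1" using XL[OF k1(1)] TXm[OF k1(2)] c1 k1 unfolding c_def by auto
      also have "\<dots> = d k" using dm[of "k+1"] dm[of k] 2 bs by auto
      finally show ?thesis using 2 X'_mid L'_mid XL[OF k1(1)] by auto
    next
      case 3
      have "card (Xs a \<union> T) = card (Xs a) + card T"
        using finXs[of a] a1 ab bs TXa finite_subset[OF TX finX] by (intro card_Un_disjoint) auto
      also have "\<dots> = d b" using cardT XL[of a] dm[of b] a1 ab bs by auto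
      finally show ?thesis using 3 X'_b L'_b XLa LLa TL by auto
    next
      case 4 then show ?thesis using k X'_hi L'_hi XL by auto
    qed
  qed
  define \<sigma> where "\<sigma> = (\<lambda>k::nat. if k < a then k else if k < b then k + 1 else if k = b then a else k)"
  have L'\<sigma>: "L' = Ls \<circ> \<sigma>" unfolding L'_def \<sigma>_def using a1 by (auto simp: fun_eq_iff)
  have inj\<sigma>: "inj_on \<sigma> {1..s}" unfolding inj_on_def \<sigma>_def using ab by auto
  have im\<sigma>: "\<sigma> ` {1..s} \<subseteq> {1..s}" unfolding \<sigma>_def using a1 ab bs by auto
  have goalC: "inj_on L' {1..s}" unfolding L'\<sigma>
    by (rule comp_inj_on[OF inj\<sigma> inj_on_subset[OF inj im\<sigma>]])
  have goalD: "\<forall>k\<in>{1..s}. \<forall>m\<in>{1..s}. 1 < k \<and> m < k \<longrightarrow> L' k \<inter> X' m = {}"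
  proof (intro ballI impI)
    fix k m assume k: "k \<in> {1..s}" and m: "m \<in> {1..s}" and km: "1 < k \<and> m < k"
    consider "k < a" | "a \<le> k" "k < b" | "k = b" | "b < k" by linarith
    then show "L' k \<inter> X' m = {}"
    proof cases
      case 1 then show ?thesis using k m km X'_lo L'_lo disj by auto
    next
      case 2
      have k1: "k+1 \<in> {1..s}" using 2 bs by auto
      show ?thesis
      proof (cases "m < a")
        case True then show ?thesis using 2 k1 m km X'_lo L'_mid disj[OF k1 m] by auto
      next
        case False
        have m1: "m+1 \<in> {1..s}" using km 2 bs by auto
        show ?thesis using False 2 km X'_mid L'_mid disj[OF k1 m1] by auto
      qed
    next
      case 3
      consider "m < a" | "a \<le> m" by linarith
      then show ?thesis
      proof cases
        case 1 then show ?thesis using 3 m km X'_lo L'_b disj[of a m] a1 ab bs by auto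
      next
        case 2
        have m1: "m+1 \<in> {a+1..b}" using km 2 3 by auto
        show ?thesis using 2 3 km X'_mid L'_b TXm[OF m1] by auto
      qed
    next
      case 4
      then have bk: "b < k" .
      consider "m < a" | "a \<le> m" "m < b" | "m = b" | "b < m" by linarith
      then show ?thesis
      proof cases
        case 1 then show ?thesis using bk k m km X'_lo L'_hi disj by auto
      next
        case 2
        have m1: "m+1 \<in> {1..s}" using 2 bs by auto
        show ?thesis using 2 bk k km X'_mid L'_hi disj[OF k m1] by auto
      next
        case 3
        have "Ls k \<inter> Xs a = {}" using disj[of k a] k 3 bk a1 ab by auto
        moreover have "\<And>m'. m' \<in> {a+1..b} \<Longrightarrow> Ls k \<inter> Xs m' = {}"
          using disj k bk a1 by auto
        ultimately show ?thesis using 3 bk X'_b L'_hi TU by blast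
      next
        case 4 then show ?thesis using bk k m km X'_hi L'_hi disj by auto
      qed
    qed
  qed
  have "kconfig X d X' L' s"
    unfolding kconfig_def using finX XP2 d1 dmono goalA goalB goalC goalD by blast
  moreover have r1: "s - j - 2 = b - 1" unfolding b_def by simp
  have r2: "s - i = a" "s - j - 1 = b" unfolding a_def b_def by simp_all
  ultimately show ?thesis
    unfolding Let_def X'_def L'_def T_def by (simp only: r1 r2)
qed
end
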